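(* Let $k\ge2$, $n\ge1$, $A=\{0<1<\cdots<k-1\}$, let $\alpha=0\,1\,2\cdots(k-1)\in A^{k}$ and $v=\alpha^{k^{n-1}}$. Let $M$ be the unique multiset of necklaces with $BW(M)=v$, and let $T=T(M)$ be its table. Then $T$ has exactly $n$ columns and its rows, from top to bottom, are the $n$-digit base-$k$ representations of $0,1,\dots,k^{n}-1$ in increasing order. Moreover $M$ is the set of necklaces of all Lyndon words over $A$ whose length divides $n$, and the rows of $T$ whose roots are Lyndon words occur in $T$ in lexicographic order.
   Context: Words are compared lexicographically (a proper prefix precedes the longer word). A word is primitive if it is not a proper power of another word; the root of a word $w$ is the shortest $r$ with $w=r^{t}$, $t\ge1$. A necklace is the set of conjugates ($xy\sim yx$) of a primitive word; its Lyndon word is its lexicographically least element. For a finite multiset $M$ of necklaces, with $l$ the lcm of their lengths, the table $T(M)$ is the lexicographically sorted list (as rows) of all words $u^{l/|u|}$, $u$ ranging over the words of each necklace of $M$ (with multiplicity), and $BW(M)$ is the last column of $T(M)$ read from top to bottom. It is known that $BW$ is a bijection from finite multisets of necklaces over $A$ onto $A^{*}$. *)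

theory Defs
  imports Main "HOL-Library.Multiset" "HOL-Library.List_Lexorder"
begin

text \<open>Words over the alphabet are lists of naturals; the order on words is the
lexicographic order of List_Lexorder (a proper prefix precedes the longer word).\<close>

definition wpow :: "'a list \<Rightarrow> nat \<Rightarrow> 'a list" where
  "wpow u t = concat (replicate t u)"

definition primitive :: "'a list \<Rightarrow> bool" where
  "primitive w \<longleftrightarrow> w \<noteq> [] \<and> \<not> (\<exists>r t. t \<ge> 2 \<and> w = wpow r t)"

definition root :: "'a list \<Rightarrow> 'a list" where
  "root w = (ARG_MIN length r. \<exists>t\<ge>1. w = wpow r t)"

definition conjugate :: "'a list \<Rightarrow> 'a list \<Rightarrow> bool" where
  "conjugate u v \<longleftrightarrow> (\<exists>x y. u = x @ y \<and> v = y @ x)"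

definition necklace_of :: "'a list \<Rightarrow> 'a list set" where
  "necklace_of w = {u. conjugate w u}"

definition is_necklace :: "'a list set \<Rightarrow> bool" where
  "is_necklace N \<longleftrightarrow> (\<exists>w. primitive w \<and> N = necklace_of w)"

definition lyndon :: "'a::linorder list \<Rightarrow> bool" where
  "lyndon w \<longleftrightarrow> primitive w \<and> (\<forall>u\<in>necklace_of w. w \<le> u)"

definition table_lcm :: "'a list set multiset \<Rightarrow> nat" where
  "table_lcm M = Lcm {length u | u N. N \<in># M \<and> u \<in> N}"

definition table_rows :: "'a list set multiset \<Rightarrow> 'a list multiset" where
  "table_rows M = (\<Sum>N\<in>#M. image_mset (\<lambda>u. wpow u (table_lcm M div length u)) (mset_set N))"

definition table :: "'a::linorder list set multiset \<Rightarrow> 'a list list" where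
  "table M = sorted_list_of_multiset (table_rows M)"

definition BW :: "'a::linorder list set multiset \<Rightarrow> 'a list" where
  "BW M = map last (table M)"

definition digits :: "nat \<Rightarrow> nat \<Rightarrow> nat \<Rightarrow> nat list" where
  "digits k n m = map (\<lambda>i. m div k ^ (n - 1 - i) mod k) [0..<n]"

end

theory Submission
  imports Defs
begin


lemma wpow_0[simp]: "wpow u 0 = []" by (simp add: wpow_def)
lemma wpow_Suc: "wpow u (Suc t) = u @ wpow u t" by (simp add: wpow_def)
lemma wpow_1[simp]: "wpow u 1 = u" by (simp add: wpow_def)
lemma wpow_Nil[simp]: "wpow [] t = []" by (simp add: wpow_def)
lemma wpow_Suc0[simp]: "wpow u (Suc 0) = u" by (simp add: wpow_def)
lemma length_wpow[simp]: "length (wpow u t) = t * length u"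
  by (induction t) (auto simp: wpow_Suc)
lemma wpow_add: "wpow u (a + b) = wpow u a @ wpow u b"
  by (induction a) (auto simp: wpow_Suc)
lemma wpow_wpow: "wpow (wpow s c) t = wpow s (c * t)"
  by (induction t) (auto simp: wpow_Suc wpow_add[symmetric])
lemma set_wpow: "set (wpow u t) \<subseteq> set u"
  by (induction t) (auto simp: wpow_Suc)
lemma nth_wpow: "i < t * length u \<Longrightarrow> wpow u t ! i = u ! (i mod length u)"
proof (induction t arbitrary: i)
  case 0 then show ?case by simp
next
  case (Suc t)
  show ?case
  proof (cases "i < length u")
    case True then show ?thesis by (simp add: wpow_Suc nth_append)
  next
    case False
    then have "wpow u t ! (i - length u) = u ! ((i - length u) mod length u)"
      using Suc by (intro Suc.IH) auto
    then show ?thesis using False by (simp add: wpow_Suc nth_append le_mod_geq)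
  qed
qed
lemma take_wpow: "0 < t \<Longrightarrow> take (length u) (wpow u t) = u"
  by (cases t) (auto simp: wpow_Suc)

lemma rotate_wpow: "rotate j (wpow s c) = wpow (rotate j s) c"
proof (rule nth_equalityI)
  show "length (rotate j (wpow s c)) = length (wpow (rotate j s) c)" by simp
next
  fix i assume i: "i < length (rotate j (wpow s c))"
  then have i': "i < c * length s" by simp
  have cp: "0 < c * length s" using i' by (cases "c * length s") auto
  then have sp: "0 < length s" by simp
  have "rotate j (wpow s c) ! i = wpow s c ! ((i + j) mod (c * length s))"
    using i' by (simp add: nth_rotate add.commute)
  also have "\<dots> = s ! ((i + j) mod (c * length s) mod length s)"
    using cp by (intro nth_wpow) simp
  also have "\<dots> = s ! ((i + j) mod length s)" by (simp add: mod_mod_cancel)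
  finally have 1: "rotate j (wpow s c) ! i = s ! ((i + j) mod length s)" .
  have "wpow (rotate j s) c ! i = rotate j s ! (i mod length s)"
    using i' nth_wpow[of i c "rotate j s"] by simp
  also have "\<dots> = s ! ((i mod length s + j) mod length s)"
    using sp by (simp add: nth_rotate add.commute)
  also have "\<dots> = s ! ((i + j) mod length s)" by (simp add: mod_add_left_eq)
  finally show "rotate j (wpow s c) ! i = wpow (rotate j s) c ! i" using 1 by simp
qed

lemma rotate_self_nth: "rotate h u = u \<Longrightarrow> i < length u \<Longrightarrow> u ! i = u ! ((i + h) mod length u)"
proof -
  assume r: "rotate h u = u" and i: "i < length u"
  have "rotate h u ! i = u ! ((i + h) mod length u)" using i nth_rotate[of i u h] by (simp add: add.commute)
  then show ?thesis using r by simp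
qed

lemma rotate_mult: "rotate h u = u \<Longrightarrow> rotate (h * c) u = u"
  by (induction c) (auto simp: rotate_rotate[symmetric] add.commute)

lemma rotate_gcd: assumes "rotate a u = u" "rotate b u = u" shows "rotate (gcd a b) u = u"
proof (cases "a = 0")
  case True then show ?thesis using assms by simp
next
  case False
  then obtain x y where xy: "a * x = b * y + gcd a b" using bezout_nat by blast
  have "u = rotate (a * x) u" using rotate_mult[OF assms(1)] by simp
  also have "\<dots> = rotate (gcd a b) (rotate (b * y) u)" by (simp add: xy rotate_rotate add.commute)
  also have "\<dots> = rotate (gcd a b) u" using rotate_mult[OF assms(2)] by simp
  finally show ?thesis by simp
qed

lemma rotate_period_wpow:
  assumes r: "rotate h u = u" and h: "0 < h" "h dvd length u" and ne: "u \<noteq> []"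
  shows "u = wpow (take h u) (length u div h)"
proof -
  have per: "\<forall>i<length u. u ! i = u ! (i mod h)"
  proof (intro allI)
    fix i show "i < length u \<longrightarrow> u ! i = u ! (i mod h)"
    proof (induction i rule: less_induct)
      case (less i)
      show ?case
      proof (cases "i < h")
        case True then show ?thesis by simp
      next
        case False
        show ?thesis
        proof
          assume i: "i < length u"
          have "u ! (i - h) = u ! ((i - h + h) mod length u)"
            using i by (intro rotate_self_nth[OF r]) auto
          also have "\<dots> = u ! i" using False i by simp
          finally have "u ! i = u ! (i - h)" by simp
          also have "\<dots> = u ! ((i - h) mod h)" using less.IH[of "i - h"] h i False by auto
          also have "(i - h) mod h = i mod h" using False by (simp add: le_mod_geq)
          finally show "u ! i = u ! (i mod h)" .
        qed
      qed
    qed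
  qed
  have hl: "h \<le> length u" using h ne by (simp add: dvd_imp_le)
  have len: "length u div h * h = length u" using h by simp
  show ?thesis
  proof (rule nth_equalityI)
    show "length u = length (wpow (take h u) (length u div h))" using hl len by (simp add: min_def)
  next
    fix i assume i: "i < length u"
    have "wpow (take h u) (length u div h) ! i = take h u ! (i mod length (take h u))"
      using i hl len by (intro nth_wpow) (simp add: min_def)
    also have "\<dots> = u ! (i mod h)" using hl h by (simp add: min_def)
    finally show "u ! i = wpow (take h u) (length u div h) ! i" using per i by simp
  qed
qed

lemma primitive_rotate_trivial:
  assumes p: "primitive u" and r: "rotate h u = u" and h: "0 < h" "h dvd length u"
  shows "h = length u"
proof (rule ccontr)
  assume ne: "h \<noteq> length u"
  have "h \<le> length u" using h p by (auto simp: primitive_def intro: dvd_imp_le)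
  then have "h < length u" using ne by simp
  then have hl: "h < length u" .
  obtain q where q: "length u = h * q" using h(2) by blast
  have "q \<noteq> 0" using q hl by auto
  moreover have "q \<noteq> 1" using q hl by auto
  ultimately have "q \<ge> 2" by simp
  moreover have "length u div h = q" using q h by simp
  ultimately have "length u div h \<ge> 2" by simp
  then show False using p rotate_period_wpow[OF r h] primitive_def[of u] unfolding primitive_def by blast
qed

lemma rotate_length_self: "rotate (length u) u = u"
  using rotate_append[of u "[]"] by simp

lemma lemmaA:
  assumes p: "primitive u" and r: "rotate g (wpow u a) = wpow u a" and a: "0 < a"
  shows "length u dvd g"
proof -
  have "wpow (rotate g u) a = wpow u a" using r by (simp add: rotate_wpow)
  then have "take (length u) (wpow (rotate g u) a) = u" using take_wpow[OF a] by simp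
  then have r1: "rotate g u = u" using take_wpow[OF a, of "rotate g u"] by simp
  have pos: "0 < length u" using p by (simp add: primitive_def)
  have "rotate (gcd g (length u)) u = u" using rotate_gcd[OF r1 rotate_length_self] .
  then have "gcd g (length u) = length u"
    using pos by (intro primitive_rotate_trivial[OF p]) auto
  then show ?thesis by (metis gcd_dvd1)
qed

lemma primitive_root_unique:
  assumes "primitive u" "primitive w" "wpow u a = wpow w b" "0 < a" "0 < b"
  shows "u = w"
proof -
  have "rotate (length w) (wpow w b) = wpow w b" by (simp add: rotate_wpow rotate_length_self)
  then have d1: "length u dvd length w" using assms by (intro lemmaA) auto
  have "rotate (length u) (wpow w b) = wpow w b"
    using assms(3) by (metis rotate_wpow rotate_length_self)
  then have d2: "length w dvd length u" using assms by (intro lemmaA[of w "length u" b]) auto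
  have lu: "length u = length w" using d1 d2 by (simp add: dvd_antisym)
  have "u = take (length u) (wpow u a)" using take_wpow[of a u] assms(4) by simp
  also have "\<dots> = take (length w) (wpow w b)" using assms(3) lu by simp
  also have "\<dots> = w" using take_wpow[of b w] assms(5) by simp
  finally show ?thesis .
qed




lemma conjugate_iff_rotate: "conjugate a b \<longleftrightarrow> (\<exists>i. b = rotate i a)"
proof
  assume "conjugate a b"
  then obtain x y where "a = x @ y" "b = y @ x" by (auto simp: conjugate_def)
  then show "\<exists>i. b = rotate i a" by (metis rotate_append)
next
  assume "\<exists>i. b = rotate i a"
  then obtain i where "b = rotate i a" by blast
  then show "conjugate a b" unfolding conjugate_def
    by (metis append_take_drop_id rotate_drop_take)
qed

lemma necklace_of_eq: "necklace_of w = range (\<lambda>i. rotate i w)"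
  by (auto simp: necklace_of_def conjugate_iff_rotate)

lemma finite_necklace_of: "finite (necklace_of w)"
proof -
  have "range (\<lambda>i. rotate i w) \<subseteq> (\<lambda>i. rotate i w) ` {..<Suc (length w)}"
  proof
    fix x assume "x \<in> range (\<lambda>i. rotate i w)"
    then obtain i where x: "x = rotate i w" by blast
    show "x \<in> (\<lambda>i. rotate i w) ` {..<Suc (length w)}"
    proof (cases "w = []")
      case True then show ?thesis using x by auto
    next
      case False
      then have "i mod length w < Suc (length w)" by (simp add: less_SucI)
      then show ?thesis using x rotate_conv_mod[of i w] by blast
    qed
  qed
  then show ?thesis unfolding necklace_of_eq by (rule finite_subset) simp
qed

lemma self_in_necklace: "w \<in> necklace_of w"
  unfolding necklace_of_eq by (metis rangeI rotate0 id_apply)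

lemma necklace_sym: "u \<in> necklace_of w \<Longrightarrow> w \<in> necklace_of u"
  by (auto simp: necklace_of_def conjugate_def)

lemma necklace_trans: "u \<in> necklace_of w \<Longrightarrow> necklace_of u \<subseteq> necklace_of w"
  unfolding necklace_of_eq by (auto simp: rotate_rotate)

lemma necklace_eq: "u \<in> necklace_of w \<Longrightarrow> necklace_of u = necklace_of w"
  by (meson necklace_sym necklace_trans subset_antisym)

lemma necklace_length: "u \<in> necklace_of w \<Longrightarrow> length u = length w"
  unfolding necklace_of_eq by auto

lemma necklace_rotate1: "rotate1 ` necklace_of w = necklace_of w"
proof
  show "rotate1 ` necklace_of w \<subseteq> necklace_of w"
    unfolding necklace_of_eq by (auto simp: rotate_Suc[symmetric] simp del: rotate_Suc)
next
  show "necklace_of w \<subseteq> rotate1 ` necklace_of w"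
  proof
    fix x assume "x \<in> necklace_of w"
    then obtain i where x: "x = rotate i w" unfolding necklace_of_eq by blast
    show "x \<in> rotate1 ` necklace_of w"
    proof (cases "w = []")
      case True then show ?thesis using x self_in_necklace[of w] by force
    next
      case False
      have "rotate1 (rotate (i + length w - 1) w) = rotate (Suc (i + length w - 1)) w" by simp
      also have "Suc (i + length w - 1) = i + length w" using False by simp
      also have "rotate (i + length w) w = rotate i w"
        by (metis rotate_rotate rotate_length_self add.commute)
      finally show ?thesis using x unfolding necklace_of_eq by (metis rangeI image_eqI)
    qed
  qed
qed

lemma primitive_rotate: assumes p: "primitive w" shows "primitive (rotate i w)"
proof -
  have ne: "rotate i w \<noteq> []" using p by (simp add: primitive_def)
  have wback: "w \<in> necklace_of (rotate i w)"
    by (rule necklace_sym) (auto simp: necklace_of_eq)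
  then obtain j where j: "w = rotate j (rotate i w)" unfolding necklace_of_eq by blast
  have "\<not> (\<exists>r t. 2 \<le> t \<and> rotate i w = wpow r t)"
  proof
    assume "\<exists>r t. 2 \<le> t \<and> rotate i w = wpow r t"
    then obtain r t where "2 \<le> t" "rotate i w = wpow r t" by blast
    then have "w = wpow (rotate j r) t" using j by (simp add: rotate_wpow)
    then show False using p \<open>2 \<le> t\<close> unfolding primitive_def by blast
  qed
  then show ?thesis using ne unfolding primitive_def by blast
qed

lemma primitive_necklace: "primitive w \<Longrightarrow> u \<in> necklace_of w \<Longrightarrow> primitive u"
  unfolding necklace_of_eq using primitive_rotate by blast

lemma less_append_left_iff: "(p @ a < p @ b) \<longleftrightarrow> a < (b::'a::linorder list)"
  by (induction p) auto

lemma le_append_left_iff: "(p @ a \<le> p @ b) \<longleftrightarrow> a \<le> (b::'a::linorder list)"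
  by (induction p) auto

lemma less_append_same_length:
  "length a = length b \<Longrightarrow> a < b \<Longrightarrow> a @ c < b @ (d::'a::linorder list)"
  by (induction a b rule: list_induct2) auto

lemma append_less_imp_le:
  assumes "length a = length b" "a @ c < b @ (d::'a::linorder list)"
  shows "a \<le> b"
proof (rule ccontr)
  assume "\<not> a \<le> b"
  then have "b < a" by simp
  then have "b @ d < a @ c" using assms(1) by (intro less_append_same_length) auto
  then show False using assms(2) by simp
qed

lemma lyndon_less_comm:
  fixes x y :: "'a::linorder list"
  assumes ly: "lyndon y" and xy: "x < y" and xne: "x \<noteq> []"
  shows "x @ y < y @ x"
proof -
  have "(x, y) \<in> lexord {(u, v). u < v}" using xy by (simp add: list_less_def)
  then consider (pre) a v where "y = x @ a # v"
    | (diff) u a b v w where "a < b" "x = u @ a # v" "y = u @ b # w"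
    unfolding lexord_def by blast
  then show ?thesis
  proof cases
    case (diff u a b v w)
    then show ?thesis by (simp add: less_append_left_iff)
  next
    case (pre a v)
    define z where "z = a # v"
    have y: "y = x @ z" using pre z_def by simp
    have pr: "primitive y" using ly by (simp add: lyndon_def)
    have "z @ x \<in> necklace_of y" using y by (auto simp: necklace_of_def conjugate_def)
    then have le: "y \<le> z @ x" using ly by (simp add: lyndon_def)
    have ne: "z @ x \<noteq> y"
    proof
      assume eq: "z @ x = y"
      have "rotate (length x) y = y" using eq y by (simp add: rotate_append)
      then have "length y dvd length x" using pr lemmaA[of y "length x" 1] by simp
      moreover have "0 < length x" "length x < length y" using xne y z_def by auto
      ultimately show False by (simp add: nat_dvd_not_less)
    qed
    have "x @ z < z @ x" using le ne y by simp
    then show ?thesis using y by (simp add: less_append_left_iff)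
  qed
qed

lemma pow_comm_less1:
  fixes u v :: "'a::linorder list"
  assumes "u @ v < v @ u" shows "0 < a \<Longrightarrow> wpow u a @ v < v @ wpow u a"
proof (induction a)
  case 0 then show ?case by simp
next
  case (Suc a)
  show ?case
  proof (cases "a = 0")
    case True then show ?thesis using assms by (simp add: wpow_Suc)
  next
    case False
    have "wpow u (Suc a) @ v = u @ (wpow u a @ v)" by (simp add: wpow_Suc)
    also have "\<dots> < u @ (v @ wpow u a)" using Suc False by (simp add: less_append_left_iff)
    also have "\<dots> = (u @ v) @ wpow u a" by simp
    also have "\<dots> < (v @ u) @ wpow u a"
      using less_append_same_length[of "u @ v" "v @ u" "wpow u a" "wpow u a"] assms by simp
    also have "\<dots> = v @ wpow u (Suc a)" by (simp add: wpow_Suc)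
    finally show ?thesis .
  qed
qed

lemma pow_comm_less2:
  fixes u v :: "'a::linorder list"
  assumes "u @ v < v @ u" shows "0 < b \<Longrightarrow> u @ wpow v b < wpow v b @ u"
proof (induction b)
  case 0 then show ?case by simp
next
  case (Suc b)
  show ?case
  proof (cases "b = 0")
    case True then show ?thesis using assms by (simp add: wpow_Suc)
  next
    case False
    have "u @ wpow v (Suc b) = (u @ v) @ wpow v b" by (simp add: wpow_Suc)
    also have "\<dots> < (v @ u) @ wpow v b"
      using less_append_same_length[of "u @ v" "v @ u" "wpow v b" "wpow v b"] assms by simp
    also have "\<dots> = v @ (u @ wpow v b)" by simp
    also have "\<dots> < v @ (wpow v b @ u)" using Suc False by (simp add: less_append_left_iff)
    also have "\<dots> = wpow v (Suc b) @ u" by (simp add: wpow_Suc)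
    finally show ?thesis .
  qed
qed

lemma root_wpow:
  assumes p: "primitive u" and c: "0 < c"
  shows "root (wpow u c) = u"
proof -
  define w where "w = wpow u c"
  define P where "P = (\<lambda>r. \<exists>t\<ge>1. w = wpow r t)"
  have Pu: "P u" using c unfolding P_def w_def by (intro exI[of _ c]) simp
  have rt: "root w = arg_min length P" by (simp add: root_def P_def)
  from arg_min_nat_lemma[of P u length, OF Pu]
  have 1: "P (root w)" and 2: "\<forall>y. P y \<longrightarrow> length (root w) \<le> length y" by (auto simp: rt)
  obtain t where t: "t \<ge> 1" "w = wpow (root w) t" using 1 P_def by blast
  have "length w = c * length u" by (simp add: w_def)
  moreover have "0 < length u" using p by (simp add: primitive_def)
  ultimately have wne: "w \<noteq> []" using c by auto
  have rne: "root w \<noteq> []"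
  proof
    assume "root w = []"
    then have "length w = 0" using t(2) arg_cong[OF t(2), of length] by simp
    then show False using wne by simp
  qed
  have "\<not> (\<exists>r t. 2 \<le> t \<and> root w = wpow r t)"
  proof
    assume "\<exists>r t. 2 \<le> t \<and> root w = wpow r t"
    then obtain s d where sd: "2 \<le> d" "root w = wpow s d" by blast
    then have "w = wpow s (d * t)" using t by (simp add: wpow_wpow)
    moreover have "d * t \<ge> 1" using sd t by simp
    ultimately have "P s" unfolding P_def by blast
    then have "length (root w) \<le> length s" using 2 by blast
    moreover have "length s > 0" using rne sd by (cases s) auto
    ultimately show False using sd by simp
  qed
  then have pr: "primitive (root w)" using rne unfolding primitive_def by blast
  have "root w = u" using primitive_root_unique[OF pr p, of t c] t c by (simp add: w_def)
  then show ?thesis by (simp add: w_def)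
qed




lemma sorted_nth_char:
  fixes L :: "'a::linorder list"
  assumes s: "sorted L"
    and lo: "card {i. i < length L \<and> L ! i < x} \<le> p"
    and hi: "p < card {i. i < length L \<and> L ! i \<le> x}"
  shows "p < length L \<and> L ! p = x"
proof -
  have "card {i. i < length L \<and> L ! i \<le> x} \<le> card {..<length L}"
    by (intro card_mono) auto
  then have pl: "p < length L" using hi by simp
  have "\<not> L ! p < x"
  proof
    assume a: "L ! p < x"
    have "{..p} \<subseteq> {i. i < length L \<and> L ! i < x}"
    proof
      fix i assume "i \<in> {..p}"
      then have "i \<le> p" by simp
      then have "L ! i \<le> L ! p" using s pl by (intro sorted_nth_mono) auto
      then show "i \<in> {i. i < length L \<and> L ! i < x}" using a pl \<open>i \<le> p\<close> by auto
    qed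
    then have "card {..p} \<le> card {i. i < length L \<and> L ! i < x}" by (intro card_mono) auto
    then show False using lo by simp
  qed
  moreover have "\<not> x < L ! p"
  proof
    assume a: "x < L ! p"
    have "{i. i < length L \<and> L ! i \<le> x} \<subseteq> {..<p}"
    proof
      fix i assume i: "i \<in> {i. i < length L \<and> L ! i \<le> x}"
      show "i \<in> {..<p}"
      proof (rule ccontr)
        assume "i \<notin> {..<p}"
        then have "p \<le> i" by simp
        then have "L ! p \<le> L ! i" using s i by (intro sorted_nth_mono) auto
        then show False using a i by auto
      qed
    qed
    then have "card {i. i < length L \<and> L ! i \<le> x} \<le> card {..<p}" by (intro card_mono) auto
    then show False using hi by simp
  qed
  ultimately show ?thesis using pl by simp
qed

lemma card_transfer:
  assumes "mset (map r L) = mset L"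
  shows "card {i. i < length L \<and> P (L ! i)} = card {i. i < length L \<and> P (r (L ! i))}"
proof -
  have "card {i. i < length L \<and> P (L ! i)} = length (filter P L)"
    by (simp add: length_filter_conv_card)
  also have "\<dots> = size (filter_mset P (mset L))" by (metis mset_filter size_mset)
  also have "\<dots> = size (filter_mset P (mset (map r L)))" using assms by simp
  also have "\<dots> = length (filter P (map r L))" by (metis mset_filter size_mset)
  also have "\<dots> = length (filter (P \<circ> r) L)" by (simp add: filter_map)
  also have "\<dots> = card {i. i < length L \<and> P (r (L ! i))}"
    by (simp add: length_filter_conv_card)
  finally show ?thesis .
qed

lemma rotr_eq: "length y = l \<Longrightarrow> 0 < l \<Longrightarrow> rotate (l - 1) y = last y # butlast y"
  by (metis append_butlast_last_id length_butlast length_greater_0_conv rotate_append append_Cons append_Nil)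

lemma LF_step:
  fixes L :: "'a::linorder list list"
  assumes s: "sorted L" and len: "\<forall>x\<in>set L. length x = l" and l: "0 < l"
   and closed: "mset (map (rotate (l - 1)) L) = mset L"
   and j: "j < length L"
  shows "card {i. i < length L \<and> last (L!i) < last (L!j)} + card {i. i < j \<and> last (L!i) = last (L!j)} < length L
     \<and> L ! (card {i. i < length L \<and> last (L!i) < last (L!j)} + card {i. i < j \<and> last (L!i) = last (L!j)})
         = rotate (l - 1) (L ! j)"
proof -
  define A where "A = {i. i < length L \<and> last (L!i) < last (L!j)}"
  define B where "B = {i. i < j \<and> last (L!i) = last (L!j)}"
  define x where "x = rotate (l - 1) (L ! j)"
  have lenI: "\<And>i. i < length L \<Longrightarrow> length (L ! i) = l" using len by auto
  have rr: "\<And>i. i < length L \<Longrightarrow> rotate (l - 1) (L ! i) = last (L!i) # butlast (L!i)"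
    using lenI l rotr_eq by blast
  have x: "x = last (L!j) # butlast (L!j)" using rr j x_def by simp
  have snoc: "\<And>i. i < length L \<Longrightarrow> L ! i = butlast (L!i) @ [last (L!i)]"
    using lenI l by (metis append_butlast_last_id length_greater_0_conv)
  have lenb: "\<And>i. i < length L \<Longrightarrow> length (butlast (L!i)) = l - 1" using lenI by simp
  have fA: "finite A" "finite B" by (auto simp: A_def B_def)
  have c1: "card {i. i < length L \<and> L ! i < x} = card {i. i < length L \<and> rotate (l - 1) (L ! i) < x}"
    using card_transfer[OF closed] .
  have "{i. i < length L \<and> rotate (l - 1) (L ! i) < x} \<subseteq> A \<union> B"
  proof
    fix i assume i: "i \<in> {i. i < length L \<and> rotate (l - 1) (L ! i) < x}"
    then have il: "i < length L" and lt: "last (L!i) # butlast (L!i) < last (L!j) # butlast (L!j)"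
      using rr x by auto
    show "i \<in> A \<union> B"
    proof (cases "last (L!i) < last (L!j)")
      case True then show ?thesis using il by (auto simp: A_def)
    next
      case False
      then have eq: "last (L!i) = last (L!j)" and bl: "butlast (L!i) < butlast (L!j)" using lt by auto
      have "L ! i < L ! j"
        using less_append_same_length[OF _ bl, of "[last (L!i)]" "[last (L!j)]"] lenb il j snoc
        by metis
      then have "i < j"
        using s il j by (metis leD linorder_not_less sorted_nth_mono)
      then show ?thesis using eq by (auto simp: B_def)
    qed
  qed
  then have "card {i. i < length L \<and> rotate (l - 1) (L ! i) < x} \<le> card (A \<union> B)"
    using fA by (intro card_mono) auto
  also have "\<dots> \<le> card A + card B" by (rule card_Un_le)
  finally have lo: "card {i. i < length L \<and> L ! i < x} \<le> card A + card B" using c1 by simp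
  have c2: "card {i. i < length L \<and> L ! i \<le> x} = card {i. i < length L \<and> rotate (l - 1) (L ! i) \<le> x}"
    using card_transfer[OF closed] .
  have sub: "A \<union> insert j B \<subseteq> {i. i < length L \<and> rotate (l - 1) (L ! i) \<le> x}"
  proof
    fix i assume "i \<in> A \<union> insert j B"
    then consider "i \<in> A" | "i = j" | "i \<in> B" by blast
    then show "i \<in> {i. i < length L \<and> rotate (l - 1) (L ! i) \<le> x}"
    proof cases
      case 1 then show ?thesis using rr x by (auto simp: A_def)
    next
      case 2 then show ?thesis using j x_def by simp
    next
      case 3
      then have ij: "i < j" and eq: "last (L!i) = last (L!j)" by (auto simp: B_def)
      have il: "i < length L" using ij j by simp
      have "L ! i \<le> L ! j" using s ij j by (intro sorted_nth_mono) auto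
      have "butlast (L!i) \<le> butlast (L!j)"
      proof (rule ccontr)
        assume "\<not> butlast (L!i) \<le> butlast (L!j)"
        then have "butlast (L!j) < butlast (L!i)" by simp
        then have "L ! j < L ! i"
          using less_append_same_length[of "butlast (L!j)" "butlast (L!i)" "[last (L!j)]" "[last (L!i)]"]
            lenb il j snoc by metis
        then show False using \<open>L ! i \<le> L ! j\<close> by simp
      qed
      then show ?thesis using rr x il eq by auto
    qed
  qed
  have disj: "A \<inter> insert j B = {}" by (auto simp: A_def B_def)
  have "card (A \<union> insert j B) = card A + card (insert j B)"
    using fA disj by (intro card_Un_disjoint) auto
  also have "card (insert j B) = Suc (card B)" using fA by (auto simp: B_def)
  finally have "card A + card B < card (A \<union> insert j B)" by simp
  also have "\<dots> \<le> card {i. i < length L \<and> rotate (l - 1) (L ! i) \<le> x}"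
    using sub by (intro card_mono) auto
  finally have hi: "card A + card B < card {i. i < length L \<and> L ! i \<le> x}" using c2 by simp
  show ?thesis using sorted_nth_char[OF s lo hi] by (simp add: A_def B_def x_def)
qed




lemma card_mod_less:
  fixes k K c :: nat
  assumes k: "0 < k" and c: "c \<le> k"
  shows "card {i. i < k * K \<and> i mod k < c} = c * K"
proof -
  have eq: "{i. i < k * K \<and> i mod k < c} = (\<lambda>(a, b). a + k * b) ` ({..<c} \<times> {..<K})"
  proof (intro set_eqI iffI)
    fix i assume "i \<in> {i. i < k * K \<and> i mod k < c}"
    then have i: "i < k * K" "i mod k < c" by auto
    have "i div k < K" using i k by (simp add: less_mult_imp_div_less mult.commute)
    moreover have "i = i mod k + k * (i div k)" by simp
    ultimately show "i \<in> (\<lambda>(a, b). a + k * b) ` ({..<c} \<times> {..<K})"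
      using i by (intro image_eqI[of _ _ "(i mod k, i div k)"]) auto
  next
    fix i assume "i \<in> (\<lambda>(a, b). a + k * b) ` ({..<c} \<times> {..<K})"
    then obtain a b where ab: "a < c" "b < K" "i = a + k * b" by auto
    have "a < k" using ab c by simp
    then have "a + k * b < k * (b + 1)" by simp
    also have "\<dots> \<le> k * K" using ab by (intro mult_le_mono2) simp
    finally show "i \<in> {i. i < k * K \<and> i mod k < c}" using ab \<open>a < k\<close> by simp
  qed
  have inj: "inj_on (\<lambda>(a, b). a + k * b) ({..<c} \<times> {..<K})"
  proof (rule inj_onI, clarsimp)
    fix a b a' b' assume h: "a < c" "b < K" "a' < c" "b' < K" "a + k * b = a' + k * b'"
    then have "a < k" "a' < k" using c by auto
    then have "(a + k * b) mod k = a" "(a' + k * b') mod k = a'"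
      "(a + k * b) div k = b" "(a' + k * b') div k = b'" by auto
    then show "a = a' \<and> b = b'" using h by metis
  qed
  show ?thesis unfolding eq using card_image[OF inj] by (simp add: card_cartesian_product)
qed

lemma card_mod_eq_before:
  fixes k j :: nat
  assumes k: "0 < k"
  shows "card {i. i < j \<and> i mod k = j mod k} = j div k"
proof -
  have eq: "{i. i < j \<and> i mod k = j mod k} = (\<lambda>t. j mod k + k * t) ` {..<j div k}"
  proof (intro set_eqI iffI)
    fix i assume "i \<in> {i. i < j \<and> i mod k = j mod k}"
    then have i: "i < j" "i mod k = j mod k" by auto
    have ii: "i = j mod k + k * (i div k)" using i by (metis mod_mult_div_eq add.commute)
    have jj: "j = j mod k + k * (j div k)" by simp
    have "i div k < j div k"
    proof (rule ccontr)
      assume "\<not> i div k < j div k"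
      then have "k * (j div k) \<le> k * (i div k)" by simp
      then show False using i ii jj by linarith
    qed
    then show "i \<in> (\<lambda>t. j mod k + k * t) ` {..<j div k}" using ii by auto
  next
    fix i assume "i \<in> (\<lambda>t. j mod k + k * t) ` {..<j div k}"
    then obtain t where t: "t < j div k" "i = j mod k + k * t" by auto
    have jj: "j = j mod k + k * (j div k)" by simp
    have "k * t < k * (j div k)" using t k by simp
    then have "i < j" using t jj by linarith
    moreover have "i mod k = j mod k" using t by simp
    ultimately show "i \<in> {i. i < j \<and> i mod k = j mod k}" by simp
  qed
  have inj: "inj_on (\<lambda>t. j mod k + k * t) {..<j div k}" using k by (auto simp: inj_on_def)
  show ?thesis unfolding eq using card_image[OF inj] by simp
qed

definition rho :: "nat \<Rightarrow> nat \<Rightarrow> nat \<Rightarrow> nat" where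
  "rho k n j = (j mod k) * k ^ (n - 1) + j div k"

lemma rho_pow:
  fixes k n :: nat
  assumes k: "0 < k"
  shows "t \<le> n \<Longrightarrow> (rho k n ^^ t) j = (j mod k ^ t) * k ^ (n - t) + j div k ^ t"
proof (induction t)
  case 0 then show ?case by simp
next
  case (Suc t)
  then have tn: "t < n" by simp
  define X where "X = (j mod k ^ t) * k ^ (n - t) + j div k ^ t"
  have IH: "(rho k n ^^ t) j = X" using Suc X_def by simp
  have kp: "k ^ (n - t) = k * k ^ (n - Suc t)" using tn by (metis Suc_diff_Suc power_Suc)
  have X2: "X = k * ((j mod k ^ t) * k ^ (n - Suc t)) + j div k ^ t"
    using kp X_def by simp
  have Xm: "X mod k = (j div k ^ t) mod k" using X2 by simp
  have Xd: "X div k = (j mod k ^ t) * k ^ (n - Suc t) + j div k ^ t div k"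
    using X2 k by simp
  have "(rho k n ^^ Suc t) j = rho k n X" using IH by simp
  also have "\<dots> = (j div k ^ t mod k) * k ^ (n - 1) + ((j mod k ^ t) * k ^ (n - Suc t) + j div k ^ Suc t)"
  proof -
    have dd: "j div k ^ t div k = j div k ^ Suc t" by (simp only: power_Suc2 div_mult2_eq)
    show ?thesis unfolding rho_def Xm Xd dd by simp
  qed
  also have "\<dots> = (j mod k ^ Suc t) * k ^ (n - Suc t) + j div k ^ Suc t"
  proof -
    have m: "j mod k ^ Suc t = k ^ t * (j div k ^ t mod k) + j mod k ^ t"
      by (simp only: power_Suc2 mod_mult2_eq)
    have pw: "k ^ t * k ^ (n - Suc t) = k ^ (n - 1)"
    proof -
      have e: "t + (n - Suc t) = n - 1" using tn by simp
      show ?thesis by (simp only: power_add[symmetric] e)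
    qed
    show ?thesis unfolding m using pw by (simp add: algebra_simps)
  qed
  finally show ?case .
qed

lemma rho_pow_n: "0 < k \<Longrightarrow> j < k ^ n \<Longrightarrow> (rho k n ^^ n) j = j"
  using rho_pow[of k n n j] by simp

lemma rho_pow_mod: "0 < k \<Longrightarrow> t < n \<Longrightarrow> (rho k n ^^ t) j mod k = j div k ^ t mod k"
proof -
  assume k: "0 < k" and tn: "t < n"
  have kp: "k ^ (n - t) = k * k ^ (n - Suc t)" using tn by (metis Suc_diff_Suc power_Suc)
  have "(rho k n ^^ t) j = j div k ^ t + k * ((j mod k ^ t) * k ^ (n - Suc t))"
    using rho_pow[OF k, of t n j] tn kp by (simp add: algebra_simps)
  then show ?thesis by simp
qed

lemma digits_eq_imp_eq:
  fixes k :: nat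
  assumes k: "0 < k"
  shows "i < k ^ n \<Longrightarrow> j < k ^ n \<Longrightarrow> (\<forall>t<n. i div k ^ t mod k = j div k ^ t mod k) \<Longrightarrow> i = j"
proof (induction n arbitrary: i j)
  case 0 then show ?case by simp
next
  case (Suc n)
  have m: "i mod k = j mod k" using Suc.prems(3)[rule_format, of 0] by simp
  have "i < k ^ n * k" "j < k ^ n * k" using Suc.prems(1,2) by (simp_all only: power_Suc2)
  then have "i div k < k ^ n" "j div k < k ^ n" by (simp_all add: less_mult_imp_div_less)
  moreover have "\<forall>t<n. i div k div k ^ t mod k = j div k div k ^ t mod k"
  proof (intro allI impI)
    fix t assume t: "t < n"
    have "i div k div k ^ t = i div k ^ Suc t" "j div k div k ^ t = j div k ^ Suc t"
      by (simp_all only: power_Suc div_mult2_eq)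
    note this
    show "i div k div k ^ t mod k = j div k div k ^ t mod k"
    proof -
      have "i div k ^ Suc t mod k = j div k ^ Suc t mod k" using Suc.prems(3) t by blast
      then show ?thesis using \<open>i div k div k ^ t = i div k ^ Suc t\<close> \<open>j div k div k ^ t = j div k ^ Suc t\<close>
        by (simp only:)
    qed
  qed
  ultimately have "i div k = j div k" using Suc.IH by blast
  then show ?case using m by (metis div_mod_decomp)
qed




lemma in_sum_mset_image: "x \<in># (\<Sum>N\<in>#M. F N) \<Longrightarrow> \<exists>N\<in>#M. x \<in># F N"
  by (induction M) auto

lemma image_sum_mset_fixed:
  "(\<forall>N\<in>#M. image_mset g (F N) = F N) \<Longrightarrow> image_mset g (\<Sum>N\<in>#M. F N) = (\<Sum>N\<in>#M. F N)"
  by (induction M) auto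

lemma rows_form:
  "x \<in># table_rows M \<Longrightarrow> \<exists>N\<in>#M. \<exists>u\<in>N. x = wpow u (table_lcm M div length u)"
proof -
  assume "x \<in># table_rows M"
  then obtain N where N: "N \<in># M" "x \<in># image_mset (\<lambda>u. wpow u (table_lcm M div length u)) (mset_set N)"
    using in_sum_mset_image[of x "\<lambda>N. image_mset (\<lambda>u. wpow u (table_lcm M div length u)) (mset_set N)" M]
    unfolding table_rows_def by blast
  obtain u where u: "u \<in># mset_set N" "x = wpow u (table_lcm M div length u)" using N(2) by force
  have "finite N" using u(1) by (cases "finite N") auto
  then have "u \<in> N" using u(1) by simp
  then show ?thesis using N u by blast
qed

lemma len_dvd_lcm: "N \<in># M \<Longrightarrow> u \<in> N \<Longrightarrow> length u dvd table_lcm M"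
  unfolding table_lcm_def by (rule dvd_Lcm) blast

lemma row_len:
  assumes "x \<in># table_rows M" shows "length x = table_lcm M"
proof -
  obtain N u where "N \<in># M" "u \<in> N" "x = wpow u (table_lcm M div length u)"
    using rows_form[OF assms] by blast
  then show ?thesis using len_dvd_lcm[of N M u] by simp
qed

lemma row_in:
  assumes "N \<in># M" "finite N" "u \<in> N"
  shows "wpow u (table_lcm M div length u) \<in># table_rows M"
proof -
  define f where "f = (\<lambda>u::'a list. wpow u (table_lcm M div length u))"
  have tr: "table_rows M = (\<Sum>N\<in>#M. image_mset f (mset_set N))" by (simp add: table_rows_def f_def)
  obtain M' where M': "M = add_mset N M'" using assms(1) by (metis multi_member_split)
  have "f u \<in># image_mset f (mset_set N)" using assms by simp
  then have "f u \<in># (\<Sum>N\<in>#M. image_mset f (mset_set N))" unfolding M' by simp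
  then show ?thesis using tr f_def by simp
qed

lemma rotate1_wpow: "rotate1 (wpow u c) = wpow (rotate1 u) c"
  using rotate_wpow[of 1 u c] by simp

lemma rows_closed:
  assumes hyp: "\<forall>N\<in>#M. is_necklace N"
  shows "image_mset rotate1 (table_rows M) = table_rows M"
  unfolding table_rows_def
proof (rule image_sum_mset_fixed, intro ballI)
  fix N assume N: "N \<in># M"
  then obtain w where w: "N = necklace_of w" using hyp by (auto simp: is_necklace_def)
  define f where "f = (\<lambda>u::'a list. wpow u (table_lcm M div length u))"
  have "image_mset rotate1 (image_mset f (mset_set N)) = image_mset (\<lambda>u. rotate1 (f u)) (mset_set N)"
    by (simp add: multiset.map_comp comp_def)
  also have "\<dots> = image_mset (\<lambda>u. f (rotate1 u)) (mset_set N)"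
    by (simp add: f_def rotate1_wpow)
  also have "\<dots> = image_mset f (image_mset rotate1 (mset_set N))"
    by (simp add: multiset.map_comp comp_def)
  also have "image_mset rotate1 (mset_set N) = mset_set (rotate1 ` N)"
    by (rule image_mset_mset_set) (meson inj_rotate1 inj_on_subset subset_UNIV)
  also have "rotate1 ` N = N" using w necklace_rotate1 by simp
  finally show "image_mset rotate1 (image_mset f (mset_set N)) = image_mset f (mset_set N)" .
qed

lemma rows_closed_rot:
  assumes "image_mset rotate1 R = R" shows "image_mset (rotate c) R = R"
proof (induction c)
  case 0 then show ?case by simp
next
  case (Suc c)
  have "image_mset (rotate (Suc c)) R = image_mset rotate1 (image_mset (rotate c) R)"
    by (simp add: multiset.map_comp comp_def del: rotate_Suc) (rule image_mset_cong, simp)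
  then show ?case using Suc assms by (simp del: rotate_Suc)
qed




theorem theorem3p8:
  fixes k n :: nat and M :: "nat list set multiset"
  assumes "k \<ge> 2" and "n \<ge> 1"
    and "\<forall>N\<in>#M. is_necklace N \<and> (\<forall>u\<in>N. set u \<subseteq> {0..<k})"
    and "BW M = wpow [0..<k] (k ^ (n - 1))"
  shows "(\<forall>r\<in>set (table M). length r = n)
       \<and> table M = map (digits k n) [0..<k ^ n]
       \<and> M = mset_set {necklace_of w | w. lyndon w \<and> set w \<subseteq> {0..<k} \<and> length w dvd n}
       \<and> sorted_wrt (<) (map root (filter (\<lambda>r. lyndon (root r)) (table M)))"
proof -
  have k0: "0 < k" using assms by simp
  define l where "l = table_lcm M"
  define L where "L = table M"
  define R where "R = table_rows M"
  define v where "v = wpow [0..<k] (k ^ (n - 1))"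
  have hyp: "\<forall>N\<in>#M. is_necklace N" using assms(3) by blast
  have mL: "mset L = R" by (simp add: L_def R_def table_def)
  have sL: "sorted L" by (simp add: L_def table_def)
  have BWv: "map last L = v" using assms(4) by (simp add: BW_def L_def v_def)
  have kn: "k ^ (n - 1) * k = k ^ n" using assms(2)
    by (metis Suc_diff_1 less_le_trans power_Suc2 zero_less_one)
  have lenL: "length L = k ^ n" using arg_cong[OF BWv, of length] kn by (simp add: v_def)
  have vnth: "\<And>i. i < k ^ n \<Longrightarrow> last (L ! i) = i mod k"
  proof -
    fix i assume i: "i < k ^ n"
    have "last (L ! i) = v ! i" using BWv i lenL by (metis nth_map)
    also have "\<dots> = [0..<k] ! (i mod k)"
      unfolding v_def using i kn nth_wpow[of i "k ^ (n - 1)" "[0..<k]"] by simp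
    also have "\<dots> = i mod k" using k0 by simp
    finally show "last (L ! i) = i mod k" .
  qed
  have rowsL: "\<And>x. x \<in> set L \<Longrightarrow> \<exists>N\<in>#M. \<exists>u\<in>N. x = wpow u (l div length u)"
  proof -
    fix x assume "x \<in> set L"
    then have "x \<in># table_rows M" using mL unfolding R_def by (metis set_mset_mset)
    then show "\<exists>N\<in>#M. \<exists>u\<in>N. x = wpow u (l div length u)" unfolding l_def by (rule rows_form)
  qed
  have lenrows: "\<forall>x\<in>set L. length x = l"
  proof
    fix x assume "x \<in> set L"
    then have "x \<in># table_rows M" using mL unfolding R_def by (metis set_mset_mset)
    then show "length x = l" unfolding l_def by (rule row_len)
  qed
  have lenI: "\<And>j. j < k ^ n \<Longrightarrow> length (L ! j) = l"
  proof -
    fix j assume "j < k ^ n"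
    then have "L ! j \<in> set L" using lenL by (metis nth_mem)
    then show "length (L ! j) = l" using lenrows by blast
  qed
  have closed: "\<And>c. mset (map (rotate c) L) = mset L"
    using rows_closed_rot[OF rows_closed[OF hyp]] mL by (simp add: R_def)
  have kn2: "k \<le> k ^ n" using assms(2) k0 by (simp add: self_le_power)
  have one: "1 < k ^ n" using kn2 assms(1) by simp
  have l0: "0 < l"
  proof (rule ccontr)
    assume "\<not> 0 < l"
    then have "l = 0" by simp
    moreover have "0 < length L" "1 < length L" using lenL one k0 by simp_all
    then have "L ! 0 \<in> set L" "L ! 1 \<in> set L" by (simp_all only: nth_mem)
    ultimately have "L ! 0 = []" "L ! 1 = []" using lenrows by auto
    then have "last (L ! 0) = last (L ! 1)" by simp
    then show False using vnth[of 0] vnth[of 1] one assms(1) by simp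
  qed
  have step: "\<And>j. j < k ^ n \<Longrightarrow> rho k n j < k ^ n \<and> L ! (rho k n j) = rotate (l - 1) (L ! j)"
  proof -
    fix j assume j: "j < k ^ n"
    have "{i. i < length L \<and> last (L ! i) < last (L ! j)} = {i. i < k * k ^ (n - 1) \<and> i mod k < j mod k}"
      using vnth j lenL kn by (auto simp: mult.commute)
    then have A: "card {i. i < length L \<and> last (L ! i) < last (L ! j)} = (j mod k) * k ^ (n - 1)"
      using card_mod_less[OF k0, of "j mod k" "k ^ (n - 1)"] k0 by simp
    have "{i. i < j \<and> last (L ! i) = last (L ! j)} = {i. i < j \<and> i mod k = j mod k}"
      using vnth j by auto
    then have B: "card {i. i < j \<and> last (L ! i) = last (L ! j)} = j div k"
      using card_mod_eq_before[OF k0] by simp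
    show "rho k n j < k ^ n \<and> L ! (rho k n j) = rotate (l - 1) (L ! j)"
      using LF_step[OF sL lenrows l0 closed, of j] j lenL A B by (simp add: rho_def)
  qed
  have bk: "\<And>j. j < k ^ n \<Longrightarrow> L ! j = rotate 1 (L ! rho k n j)"
  proof -
    fix j assume j: "j < k ^ n"
    have "length (L ! j) = l" using lenrows j lenL by simp
    then have "rotate 1 (rotate (l - 1) (L ! j)) = L ! j"
      using l0 by (simp add: rotate_rotate rotate_length_self)
    then show "L ! j = rotate 1 (L ! rho k n j)" using step[OF j] by simp
  qed
  have iter: "\<And>t j. j < k ^ n \<Longrightarrow> (rho k n ^^ t) j < k ^ n \<and> L ! j = rotate t (L ! ((rho k n ^^ t) j))"
  proof -
    fix t show "\<And>j. j < k ^ n \<Longrightarrow> (rho k n ^^ t) j < k ^ n \<and> L ! j = rotate t (L ! ((rho k n ^^ t) j))"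
    proof (induction t)
      case 0 then show ?case by simp
    next
      case (Suc t)
      let ?y = "(rho k n ^^ t) j"
      have y: "?y < k ^ n" "L ! j = rotate t (L ! ?y)" using Suc.IH[OF Suc.prems] by blast+
      have "L ! ?y = rotate 1 (L ! rho k n ?y)" using bk y(1) by blast
      then have "L ! j = rotate t (rotate 1 (L ! rho k n ?y))" using y(2) by simp
      also have "\<dots> = rotate (t + 1) (L ! rho k n ?y)" by (simp only: rotate_rotate)
      also have "\<dots> = rotate (Suc t) (L ! ((rho k n ^^ Suc t) j))" by simp
      finally show ?case using step[OF y(1)] by simp
    qed
  qed
  have digit: "\<And>j t. j < k ^ n \<Longrightarrow> t < l \<Longrightarrow> t < n \<Longrightarrow> L ! j ! (l - 1 - t) = j div k ^ t mod k"
  proof -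
    fix j t assume j: "j < k ^ n" and tl: "t < l" and tn: "t < n"
    define y where "y = (rho k n ^^ t) j"
    have y: "y < k ^ n" "L ! j = rotate t (L ! y)" using iter[OF j, of t] by (auto simp: y_def)
    have ly: "length (L ! y) = l" using lenrows y lenL by simp
    have "L ! j ! (l - 1 - t) = L ! y ! ((l - 1 - t + t) mod l)"
      using y ly tl by (simp add: nth_rotate)
    also have "(l - 1 - t + t) mod l = l - 1" using tl by simp
    also have "L ! y ! (l - 1) = last (L ! y)"
    proof -
      have ne: "L ! y \<noteq> []" using ly l0 by auto
      show ?thesis using last_conv_nth[OF ne] ly by simp
    qed
    also have "\<dots> = y mod k" using vnth y by simp
    also have "\<dots> = j div k ^ t mod k" using rho_pow_mod[OF k0 tn] by (simp add: y_def)
    finally show "L ! j ! (l - 1 - t) = j div k ^ t mod k" .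
  qed
  have primu: "\<And>N u. N \<in># M \<Longrightarrow> u \<in> N \<Longrightarrow> primitive u"
    using hyp by (auto simp: is_necklace_def intro: primitive_necklace)
  have ldvd: "l dvd n"
    unfolding l_def table_lcm_def
  proof (rule Lcm_least)
    fix b assume "b \<in> {length u |u N. N \<in># M \<and> u \<in> N}"
    then obtain u N where uN: "b = length u" "N \<in># M" "u \<in> N" by blast
    have pu: "primitive u" using primu uN by blast
    have dl: "length u dvd l" using len_dvd_lcm uN by (simp add: l_def)
    define x where "x = wpow u (l div length u)"
    obtain w where "N = necklace_of w" using uN(2) hyp unfolding is_necklace_def by blast
    then have fN: "finite N" by (simp add: finite_necklace_of)
    have "x \<in># R" unfolding R_def x_def l_def using row_in[OF uN(2) fN uN(3)] .
    then have "x \<in> set L" using mL by (metis set_mset_mset)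
    then obtain j where j: "j < k ^ n" "x = L ! j" using lenL by (metis in_set_conv_nth)
    have "L ! j = rotate n (L ! ((rho k n ^^ n) j))" using iter[OF j(1), of n] by blast
    then have "L ! j = rotate n (L ! j)" unfolding rho_pow_n[OF k0 j(1)] .
    then have rx: "rotate n x = x" using j(2) by simp
    have upos: "0 < length u" using pu by (simp add: primitive_def)
    have "length u \<le> l" using dl l0 by (simp add: dvd_imp_le)
    then have "0 < l div length u" using upos by (simp add: div_greater_zero_iff)
    then have "length u dvd n" using lemmaA[OF pu, of n "l div length u"] rx by (simp add: x_def)
    then show "b dvd n" using uN by simp
  qed
  have ln: "l = n"
  proof (rule ccontr)
    assume "l \<noteq> n"
    moreover have "l \<le> n" using ldvd assms(2) by (intro dvd_imp_le) auto
    ultimately have ll: "l < n" by simp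
    have kl: "k ^ l < k ^ n" using ll assms(1) by (simp add: power_strict_increasing)
    have kl1: "1 \<le> k ^ l" using k0 by simp
    have "L ! 0 = L ! (k ^ l)"
    proof (rule nth_equalityI)
      show "length (L ! 0) = length (L ! (k ^ l))" using lenI kl k0 by simp
    next
      fix i assume i: "i < length (L ! 0)"
      then have il: "i < l" using lenI kl k0 by simp
      define t where "t = l - 1 - i"
      have ti: "i = l - 1 - t" "t < l" "t < n" using il ll by (auto simp: t_def)
      have "k ^ l div k ^ t = k ^ (l - t)" using k0 ti by (simp add: power_diff)
      moreover have "k ^ (l - t) mod k = 0" using ti by (simp add: power_eq_if)
      ultimately have "k ^ l div k ^ t mod k = 0" by simp
      then show "L ! 0 ! i = L ! (k ^ l) ! i"
        using digit[of 0 t] digit[of "k ^ l" t] ti kl one k0 by simp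
    qed
    moreover have "L ! 0 \<le> L ! 1" "L ! 1 \<le> L ! (k ^ l)"
      using sL kl kl1 one lenL by (auto intro!: sorted_nth_mono)
    ultimately have "L ! 0 = L ! 1" by simp
    then have "last (L ! 0) = last (L ! 1)" by simp
    then show False using vnth[of 0] vnth[of 1] one assms(1) by simp
  qed
  have Lj: "\<And>j. j < k ^ n \<Longrightarrow> L ! j = digits k n j"
  proof -
    fix j assume j: "j < k ^ n"
    show "L ! j = digits k n j"
    proof (rule nth_equalityI)
      show "length (L ! j) = length (digits k n j)" using lenI j ln by (simp add: digits_def)
    next
      fix i assume i: "i < length (L ! j)"
      then have il: "i < n" using lenI j ln by simp
      have "L ! j ! (n - 1 - (n - 1 - i)) = j div k ^ (n - 1 - i) mod k"
        using digit[of j "n - 1 - i"] j il ln by simp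
      then show "L ! j ! i = digits k n j ! i" using il by (simp add: digits_def)
    qed
  qed
  have part2: "L = map (digits k n) [0..<k ^ n]"
    using Lj lenL by (intro nth_equalityI) auto
  have part1: "\<forall>r\<in>set L. length r = n" using lenrows ln by simp
  have distL: "distinct L"
    unfolding distinct_conv_nth
  proof (intro allI impI)
    fix i j assume ij: "i < length L" "j < length L" "i \<noteq> j"
    show "L ! i \<noteq> L ! j"
    proof
      assume eq: "L ! i = L ! j"
      have "\<forall>t<n. i div k ^ t mod k = j div k ^ t mod k"
      proof (intro allI impI)
        fix t assume t: "t < n"
        show "i div k ^ t mod k = j div k ^ t mod k"
          using digit[of i t] digit[of j t] eq ij t ln lenL by simp
      qed
      then show False using digits_eq_imp_eq[OF k0, of i n j] ij lenL by simp
    qed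
  qed
  have strict: "sorted_wrt (<) L" using sL distL strict_sorted_iff by blast
  define S where "S = {necklace_of w | w. lyndon w \<and> set w \<subseteq> {0..<k} \<and> length w dvd n}"
  define W where "W = {xs. set xs \<subseteq> {0..<k} \<and> length xs = n}"
  have setL: "set L = W"
  proof (rule card_subset_eq)
    show "finite W" unfolding W_def by (rule finite_lists_length_eq) simp
    show "set L \<subseteq> W"
    proof
      fix x assume "x \<in> set L"
      then obtain j where j: "j < k ^ n" "x = L ! j" using lenL by (metis in_set_conv_nth)
      then show "x \<in> W" using Lj[OF j(1)] k0 by (auto simp: W_def digits_def)
    qed
    show "card (set L) = card W"
      using distinct_card[OF distL] lenL card_lists_length_eq[of "{0..<k}" n] by (simp add: W_def)
  qed
  have cnt: "\<And>N. count M N \<le> 1"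
  proof (rule ccontr)
    fix N assume "\<not> count M N \<le> 1"
    then have c2: "2 \<le> count M N" by simp
    then have "N \<in># M" using count_greater_zero_iff[of M N] by linarith
    then obtain M1 where M1: "M = add_mset N M1" by (metis multi_member_split)
    then have "N \<in># M1" using c2 count_greater_zero_iff[of M1 N] by simp
    then obtain M2 where M2: "M1 = add_mset N M2" by (metis multi_member_split)
    obtain w where w: "primitive w" "N = necklace_of w" using hyp \<open>N \<in># M\<close> by (auto simp: is_necklace_def)
    define f where "f = (\<lambda>u::nat list. wpow u (table_lcm M div length u))"
    have "w \<in># mset_set N" using w(2) finite_necklace_of[of w] self_in_necklace[of w] by simp
    then have "f w \<in># image_mset f (mset_set N)" by simp
    then have c1: "1 \<le> count (image_mset f (mset_set N)) (f w)" using count_greater_zero_iff[of "image_mset f (mset_set N)" "f w"] by linarith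
    have tr: "R = (\<Sum>N\<in>#M. image_mset f (mset_set N))" by (simp add: R_def table_rows_def f_def)
    have "(\<Sum>N\<in>#M. image_mset f (mset_set N)) = image_mset f (mset_set N) + image_mset f (mset_set N) + (\<Sum>N\<in>#M2. image_mset f (mset_set N))"
      unfolding M1 M2 by (simp add: add.assoc)
    then have "R = image_mset f (mset_set N) + image_mset f (mset_set N) + (\<Sum>N\<in>#M2. image_mset f (mset_set N))"
      using tr by simp
    then have "count (image_mset f (mset_set N)) (f w) + count (image_mset f (mset_set N)) (f w) \<le> count R (f w)"
      by simp
    then have "2 \<le> count R (f w)" using c1 by linarith
    moreover have "count R (f w) \<le> 1"
      using distL mL distinct_count_atmost_1[of L] by (metis order_refl zero_le_one)
    ultimately show False by simp
  qed
  have sub1: "set_mset M \<subseteq> S"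
  proof
    fix N assume N: "N \<in># M"
    obtain w where w: "primitive w" "N = necklace_of w" using hyp N by (auto simp: is_necklace_def)
    have fN: "finite N" "N \<noteq> {}" using w finite_necklace_of self_in_necklace by auto
    define w0 where "w0 = Min N"
    have w0N: "w0 \<in> N" using fN by (simp add: w0_def)
    have nw0: "necklace_of w0 = N" using w0N w necklace_eq by blast
    have "primitive w0" using w0N w primitive_necklace by blast
    moreover have "\<forall>u\<in>necklace_of w0. w0 \<le> u" using nw0 fN by (simp add: w0_def)
    ultimately have "lyndon w0" by (simp add: lyndon_def)
    moreover have "set w0 \<subseteq> {0..<k}" using assms(3) N w0N by blast
    moreover have "length w0 dvd n" using len_dvd_lcm[OF N w0N] ln by (simp add: l_def)
    ultimately show "N \<in> S" using nw0 unfolding S_def by blast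
  qed
  have sub2: "S \<subseteq> set_mset M"
  proof
    fix N' assume "N' \<in> S"
    then obtain w where w: "N' = necklace_of w" "lyndon w" "set w \<subseteq> {0..<k}" "length w dvd n"
      unfolding S_def by blast
    have pw: "primitive w" using w by (simp add: lyndon_def)
    have wpos: "0 < length w" using pw by (simp add: primitive_def)
    define r where "r = wpow w (n div length w)"
    have "r \<in> W" using w set_wpow[of w "n div length w"] by (auto simp: W_def r_def)
    then have "r \<in># R" using setL mL by (metis set_mset_mset)
    then obtain N u where Nu: "N \<in># M" "u \<in> N" "r = wpow u (l div length u)"
      using rows_form unfolding R_def l_def by blast
    have pu: "primitive u" using primu Nu by blast
    have upos: "0 < length u" using pu by (simp add: primitive_def)
    have du: "length u dvd n" using len_dvd_lcm[OF Nu(1,2)] ln by (simp add: l_def)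
    have "0 < n div length u" using du upos assms(2) by (auto intro!: div_greater_zero_iff[THEN iffD2] dvd_imp_le)
    moreover have "0 < n div length w" using w wpos assms(2) by (auto intro!: div_greater_zero_iff[THEN iffD2] dvd_imp_le)
    moreover have "wpow u (n div length u) = wpow w (n div length w)" using Nu(3) ln by (simp add: r_def)
    ultimately have "u = w" using primitive_root_unique[OF pu pw] by blast
    moreover obtain w' where "N = necklace_of w'" using hyp Nu by (auto simp: is_necklace_def)
    ultimately have "N = necklace_of w" using Nu necklace_eq by blast
    then show "N' \<in># M" using w Nu by simp
  qed
  have part3: "M = mset_set S"
  proof (rule multiset_eqI)
    fix N
    have SM: "S = set_mset M" using sub1 sub2 by blast
    have "finite S" using SM by simp
    show "count M N = count (mset_set S) N"
    proof (cases "N \<in># M")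
      case True
      then have "0 < count M N" by simp
      then have "count M N = 1" using cnt[of N] by linarith
      then show ?thesis using True SM \<open>finite S\<close> by simp
    next
      case False then show ?thesis using SM \<open>finite S\<close> by (simp add: not_in_iff)
    qed
  qed
  have rowroot: "\<And>x. x \<in> set L \<Longrightarrow> primitive (root x) \<and> x = wpow (root x) (n div length (root x)) \<and> 0 < n div length (root x)"
  proof -
    fix x assume "x \<in> set L"
    then obtain N u where Nu: "N \<in># M" "u \<in> N" "x = wpow u (l div length u)" using rowsL by blast
    have pu: "primitive u" using primu Nu by blast
    have upos: "0 < length u" using pu by (simp add: primitive_def)
    have du: "length u dvd n" using len_dvd_lcm[OF Nu(1,2)] ln by (simp add: l_def)
    have c: "0 < n div length u" using du upos assms(2) by (auto intro!: div_greater_zero_iff[THEN iffD2] dvd_imp_le)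
    have "root x = u" using root_wpow[OF pu c] Nu ln by simp
    then show "primitive (root x) \<and> x = wpow (root x) (n div length (root x)) \<and> 0 < n div length (root x)"
      using pu Nu ln c by simp
  qed
  have part4: "sorted_wrt (<) (map root (filter (\<lambda>r. lyndon (root r)) L))"
    unfolding sorted_wrt_map
  proof (rule sorted_wrt_mono_rel[OF _ sorted_wrt_filter[OF strict]])
    fix x y assume x: "x \<in> set (filter (\<lambda>r. lyndon (root r)) L)"
      and y: "y \<in> set (filter (\<lambda>r. lyndon (root r)) L)" and xy: "x < y"
    define a where "a = root x"
    define b where "b = root y"
    have xa: "primitive a" "x = wpow a (n div length a)" "0 < n div length a"
      using rowroot x by (auto simp: a_def)
    have yb: "primitive b" "y = wpow b (n div length b)" "0 < n div length b"
      using rowroot y by (auto simp: b_def)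
    have la: "lyndon a" using x by (simp add: a_def)
    have lx: "length x = n" "length y = n" using part1 x y by auto
    show "root x < root y"
    proof (rule ccontr)
      assume "\<not> root x < root y"
      then have "b \<le> a" by (simp add: a_def b_def)
      moreover have "b \<noteq> a"
      proof
        assume "b = a"
        then have "x = y" using xa yb by simp
        then show False using xy by simp
      qed
      ultimately have ba: "b < a" by simp
      have bne: "b \<noteq> []" using yb by (simp add: primitive_def)
      have "b @ a < a @ b" using lyndon_less_comm[OF la ba bne] .
      then have "wpow b (n div length b) @ a < a @ wpow b (n div length b)"
        using pow_comm_less1 yb by blast
      then have "wpow b (n div length b) @ wpow a (n div length a) < wpow a (n div length a) @ wpow b (n div length b)"
        using pow_comm_less2 xa by blast
      then have "y @ x < x @ y" using xa yb by simp
      then have "y \<le> x" using lx by (intro append_less_imp_le) auto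
      then show False using xy by simp
    qed
  qed
  show ?thesis unfolding L_def[symmetric] S_def[symmetric] using part1 part2 part3 part4 by blast
qed


end
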